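(* Let $G$ be a connected graph and let $v,w$ be vertices of $G$. Suppose there is a constant $c$ such that $|B_w(n+1)| < c\cdot |B_w(n)|$ for all $n\in\mathbb{N}$. If $G$ has 2-distinguishing density zero at $v$, then $G$ has 2-distinguishing density zero.
   Context: All graphs are simple (no loops or multiple edges) with vertex set $V$; $d$ is the graph distance. $B_x(r)=\{y\in V: d(x,y)\le r\}$ and $S_x(r)=\{y\in V: d(x,y)=r\}$. A 2-coloring $l:V\to\{\text{blue},\text{red}\}$ is preserved by an automorphism $g$ if $l(g(x))=l(x)$ for all $x\in V$; it is 2-distinguishing if the only automorphism of $G$ preserving it is the identity. Its color classes are $V_{\text{blue}}$ and $V_{\text{red}}$. For $W\subseteq V$ and $x\in V$, the density of $W$ at $x$ is $\delta_x(W):=\lim_{n\to\infty}\frac{|B_x(n)\cap W|}{|B_x(n)|}$ if the limit exists (with the conventions that a finite cardinal divided by an infinite cardinal is $0$ and a quotient of two infinite cardinals is undefined). If $\delta_x(W)$ exists for all $x\in V$, set $\delta(W):=\sup_{x\in V}\delta_x(W)$. For a 2-coloring $l$, $\delta_x(l):=\min\{\delta_x(V_{\text{blue}}),\delta_x(V_{\text{red}})\}$ and $\delta(l):=\min\{\delta(V_{\text{blue}}),\delta(V_{\text{red}})\}$. $G$ has 2-distinguishing density zero at $x$ if there is a 2-distinguishing coloring $l$ with $\delta_x(l)=0$; $G$ has 2-distinguishing density zero if there is a 2-distinguishing coloring $l$ with $\delta(l)=0$. *)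

theory Defs
  imports Complex_Main
begin

definition simple_graph :: "'a set \<Rightarrow> ('a \<Rightarrow> 'a \<Rightarrow> bool) \<Rightarrow> bool" where
  "simple_graph V E \<longleftrightarrow> (\<forall>x y. E x y \<longrightarrow> x \<in> V \<and> y \<in> V \<and> x \<noteq> y \<and> E y x)"

definition walk :: "('a \<Rightarrow> 'a \<Rightarrow> bool) \<Rightarrow> 'a \<Rightarrow> 'a \<Rightarrow> nat \<Rightarrow> bool" where
  "walk E x y n \<longleftrightarrow> (\<exists>p :: nat \<Rightarrow> 'a. p 0 = x \<and> p n = y \<and> (\<forall>i<n. E (p i) (p (Suc i))))"

definition connected_graph :: "'a set \<Rightarrow> ('a \<Rightarrow> 'a \<Rightarrow> bool) \<Rightarrow> bool" where
  "connected_graph V E \<longleftrightarrow> simple_graph V E \<and> V \<noteq> {} \<and> (\<forall>x\<in>V. \<forall>y\<in>V. \<exists>n. walk E x y n)"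

definition gdist :: "('a \<Rightarrow> 'a \<Rightarrow> bool) \<Rightarrow> 'a \<Rightarrow> 'a \<Rightarrow> nat" where
  "gdist E x y = (LEAST n. walk E x y n)"

definition gball :: "'a set \<Rightarrow> ('a \<Rightarrow> 'a \<Rightarrow> bool) \<Rightarrow> 'a \<Rightarrow> nat \<Rightarrow> 'a set" where
  "gball V E x r = {y \<in> V. (\<exists>n. walk E x y n) \<and> gdist E x y \<le> r}"

text \<open>The quotient |B_x(n) \<inter> W| / |B_x(n)| is defined unless both sets are infinite
  (finite / infinite = 0; infinite / infinite undefined).\<close>
definition dens_quot_defined :: "'a set \<Rightarrow> ('a \<Rightarrow> 'a \<Rightarrow> bool) \<Rightarrow> 'a \<Rightarrow> 'a set \<Rightarrow> nat \<Rightarrow> bool" where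
  "dens_quot_defined V E x W n \<longleftrightarrow> finite (gball V E x n) \<or> finite (gball V E x n \<inter> W)"

definition dens_quot :: "'a set \<Rightarrow> ('a \<Rightarrow> 'a \<Rightarrow> bool) \<Rightarrow> 'a \<Rightarrow> 'a set \<Rightarrow> nat \<Rightarrow> real" where
  "dens_quot V E x W n =
     (if finite (gball V E x n)
      then real (card (gball V E x n \<inter> W)) / real (card (gball V E x n))
      else 0)"

definition has_density :: "'a set \<Rightarrow> ('a \<Rightarrow> 'a \<Rightarrow> bool) \<Rightarrow> 'a \<Rightarrow> 'a set \<Rightarrow> real \<Rightarrow> bool" where
  "has_density V E x W d \<longleftrightarrow>
     (\<forall>n. dens_quot_defined V E x W n) \<and> (dens_quot V E x W \<longlonglongrightarrow> d)"

definition density_at :: "'a set \<Rightarrow> ('a \<Rightarrow> 'a \<Rightarrow> bool) \<Rightarrow> 'a \<Rightarrow> 'a set \<Rightarrow> real" where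
  "density_at V E x W = (THE d. has_density V E x W d)"

definition density_exists :: "'a set \<Rightarrow> ('a \<Rightarrow> 'a \<Rightarrow> bool) \<Rightarrow> 'a set \<Rightarrow> bool" where
  "density_exists V E W \<longleftrightarrow> (\<forall>x\<in>V. \<exists>d. has_density V E x W d)"

definition density :: "'a set \<Rightarrow> ('a \<Rightarrow> 'a \<Rightarrow> bool) \<Rightarrow> 'a set \<Rightarrow> real" where
  "density V E W = (SUP x\<in>V. density_at V E x W)"

text \<open>Colorings l : V -> {blue, red}, encoded as bool (True = blue, False = red).\<close>
definition blue_class :: "'a set \<Rightarrow> ('a \<Rightarrow> bool) \<Rightarrow> 'a set" where
  "blue_class V l = {x \<in> V. l x}"

definition red_class :: "'a set \<Rightarrow> ('a \<Rightarrow> bool) \<Rightarrow> 'a set" where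
  "red_class V l = {x \<in> V. \<not> l x}"

definition automorphism :: "'a set \<Rightarrow> ('a \<Rightarrow> 'a \<Rightarrow> bool) \<Rightarrow> ('a \<Rightarrow> 'a) \<Rightarrow> bool" where
  "automorphism V E g \<longleftrightarrow> bij_betw g V V \<and> (\<forall>x\<in>V. \<forall>y\<in>V. E x y \<longleftrightarrow> E (g x) (g y))"

definition preserves :: "'a set \<Rightarrow> ('a \<Rightarrow> 'a) \<Rightarrow> ('a \<Rightarrow> bool) \<Rightarrow> bool" where
  "preserves V g l \<longleftrightarrow> (\<forall>x\<in>V. l (g x) = l x)"

definition two_distinguishing :: "'a set \<Rightarrow> ('a \<Rightarrow> 'a \<Rightarrow> bool) \<Rightarrow> ('a \<Rightarrow> bool) \<Rightarrow> bool" where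
  "two_distinguishing V E l \<longleftrightarrow>
     (\<forall>g. automorphism V E g \<and> preserves V g l \<longrightarrow> (\<forall>x\<in>V. g x = x))"

definition coloring_density_zero_at :: "'a set \<Rightarrow> ('a \<Rightarrow> 'a \<Rightarrow> bool) \<Rightarrow> 'a \<Rightarrow> ('a \<Rightarrow> bool) \<Rightarrow> bool" where
  "coloring_density_zero_at V E x l \<longleftrightarrow>
     (\<exists>db dr. has_density V E x (blue_class V l) db \<and> has_density V E x (red_class V l) dr
              \<and> min db dr = 0)"

definition coloring_density_zero :: "'a set \<Rightarrow> ('a \<Rightarrow> 'a \<Rightarrow> bool) \<Rightarrow> ('a \<Rightarrow> bool) \<Rightarrow> bool" where
  "coloring_density_zero V E l \<longleftrightarrow>
     density_exists V E (blue_class V l) \<and> density_exists V E (red_class V l)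
     \<and> min (density V E (blue_class V l)) (density V E (red_class V l)) = 0"

definition two_dist_density_zero_at :: "'a set \<Rightarrow> ('a \<Rightarrow> 'a \<Rightarrow> bool) \<Rightarrow> 'a \<Rightarrow> bool" where
  "two_dist_density_zero_at V E x \<longleftrightarrow>
     (\<exists>l. two_distinguishing V E l \<and> coloring_density_zero_at V E x l)"

definition two_dist_density_zero :: "'a set \<Rightarrow> ('a \<Rightarrow> 'a \<Rightarrow> bool) \<Rightarrow> bool" where
  "two_dist_density_zero V E \<longleftrightarrow>
     (\<exists>l. two_distinguishing V E l \<and> coloring_density_zero V E l)"

end

theory Submission
  imports Defs
begin

lemma walk_append:
  assumes "walk E x y m" "walk E y z n" shows "walk E x z (m+n)"
proof -
  obtain p where p: "p 0 = x" "p m = y" "\<forall>i<m. E (p i) (p (Suc i))"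
    using assms(1) unfolding walk_def by blast
  obtain q where q: "q 0 = y" "q n = z" "\<forall>i<n. E (q i) (q (Suc i))"
    using assms(2) unfolding walk_def by blast
  define r where "r i = (if i \<le> m then p i else q (i - m))" for i
  have "\<forall>i<m+n. E (r i) (r (Suc i))"
  proof (intro allI impI)
    fix i assume i: "i < m+n"
    show "E (r i) (r (Suc i))"
    proof (cases "i < m")
      case True then show ?thesis using p by (simp add: r_def)
    next
      case False
      then have "r i = q (i - m)" using p q by (auto simp: r_def)
      moreover have "r (Suc i) = q (Suc (i - m))" using False by (simp add: r_def Suc_diff_le)
      moreover have "i - m < n" using i False by simp
      ultimately show ?thesis using q by simp
    qed
  qed
  moreover have "r 0 = x" "r (m+n) = z" using p q by (auto simp: r_def)
  ultimately show ?thesis unfolding walk_def by blast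
qed

lemma walk_refl: "walk E x x 0"
  unfolding walk_def by (rule exI[of _ "\<lambda>_. x"]) simp

lemma gdist_walk: "\<exists>n. walk E x y n \<Longrightarrow> walk E x y (gdist E x y)"
  unfolding gdist_def by (rule LeastI_ex)

lemma gdist_le: "walk E x y n \<Longrightarrow> gdist E x y \<le> n"
  unfolding gdist_def by (rule Least_le)

lemma gball_conn:
  assumes "connected_graph V E" "x \<in> V"
  shows "gball V E x n = {z\<in>V. gdist E x z \<le> n}"
  using assms unfolding gball_def connected_graph_def by blast

lemma gdist_tri:
  assumes "connected_graph V E" "x \<in> V" "y \<in> V" "z \<in> V"
  shows "gdist E x z \<le> gdist E x y + gdist E y z"
proof -
  have "walk E x y (gdist E x y)" "walk E y z (gdist E y z)"
    using assms by (auto simp: connected_graph_def intro!: gdist_walk)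
  then have "walk E x z (gdist E x y + gdist E y z)" by (rule walk_append)
  then show ?thesis by (rule gdist_le)
qed

lemma ball_sub:
  assumes "connected_graph V E" "x \<in> V" "y \<in> V"
  shows "gball V E x n \<subseteq> gball V E y (n + gdist E y x)"
proof
  fix z assume "z \<in> gball V E x n"
  then have z: "z \<in> V" "gdist E x z \<le> n" using gball_conn[OF assms(1,2)] by auto
  have "gdist E y z \<le> gdist E y x + gdist E x z" using gdist_tri[OF assms(1,3,2) z(1)] .
  then have "gdist E y z \<le> n + gdist E y x" using z(2) by linarith
  then show "z \<in> gball V E y (n + gdist E y x)" unfolding gball_conn[OF assms(1,3)] using z(1) by blast
qed

lemma in_ball: "x \<in> V \<Longrightarrow> x \<in> gball V E x n"
  unfolding gball_def using walk_refl[of E x] gdist_le[OF walk_refl, of E x] by auto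

lemma dens_zero_spread:
  fixes c :: real
  assumes conn: "connected_graph V E" and vV: "v \<in> V" and wV: "w \<in> V"
    and gr: "\<forall>n. finite (gball V E w n) \<and>
             real (card (gball V E w (Suc n))) < c * real (card (gball V E w n))"
    and WV: "W \<subseteq> V" and hv: "has_density V E v W 0" and xV: "x \<in> V"
  shows "has_density V E x W 0"
proof -
  have fin: "finite (gball V E y n)" if "y \<in> V" for y n
    using ball_sub[OF conn that wV, of n] gr finite_subset by blast
  have pos: "card (gball V E y n) > 0" if "y \<in> V" for y n
    using fin[OF that] in_ball[OF that] by (metis card_gt_0_iff empty_iff)
  have cpos: "c > 0"
  proof -
    have "real (card (gball V E w (Suc 0))) < c * real (card (gball V E w 0))" using gr by blast
    moreover have "real (card (gball V E w 0)) > 0" using pos[OF wV] by simp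
    ultimately show ?thesis
      by (smt (verit) mult_nonpos_nonneg of_nat_0_le_iff)
  qed
  have growth: "real (card (gball V E w (n+m))) \<le> c^m * real (card (gball V E w n))" for n m
  proof (induction m)
    case 0 then show ?case by simp
  next
    case (Suc m)
    have "real (card (gball V E w (n + Suc m))) < c * real (card (gball V E w (n+m)))"
      using gr by simp
    also have "\<dots> \<le> c * (c^m * real (card (gball V E w n)))"
      using Suc cpos by simp
    finally show ?case by simp
  qed
  define j1 where "j1 = gdist E v w"
  define a1 where "a1 = gdist E x v"
  define a2 where "a2 = gdist E v x"
  define j2 where "j2 = gdist E w v"
  define K where "K = c^(j1+a1+a2+j2)"
  have Kpos: "K > 0" using cpos by (simp add: K_def)
  let ?q = "dens_quot V E"
  have key: "?q x W (n + (j1+a1)) \<le> K * ?q v W (n + (j1+a1+a2))" for n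
  proof -
    define N where "N = n + (j1+a1)"
    have S1: "gball V E w n \<subseteq> gball V E x N"
      using ball_sub[OF conn wV vV, of n] ball_sub[OF conn vV xV, of "n+j1"]
      unfolding N_def j1_def a1_def by (simp add: add.assoc)
    have S2: "gball V E x N \<subseteq> gball V E v (n + (j1+a1+a2))"
      using ball_sub[OF conn xV vV, of N] unfolding N_def a2_def by (simp add: add.assoc)
    have S3: "gball V E v (n + (j1+a1+a2)) \<subseteq> gball V E w (n + (j1+a1+a2+j2))"
      using ball_sub[OF conn vV wV, of "n + (j1+a1+a2)"] unfolding j2_def by (simp add: add.assoc)
    define A where "A = real (card (gball V E x N \<inter> W))"
    define B where "B = real (card (gball V E x N))"
    define C where "C = real (card (gball V E v (n + (j1+a1+a2)) \<inter> W))"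
    define D where "D = real (card (gball V E v (n + (j1+a1+a2))))"
    have AC: "A \<le> C" unfolding A_def C_def
      using S2 fin[OF vV] by (auto intro!: card_mono)
    have "D \<le> real (card (gball V E w (n + (j1+a1+a2+j2))))"
      unfolding D_def using S3 fin[OF wV] by (auto intro!: card_mono)
    also have "\<dots> \<le> K * real (card (gball V E w n))" using growth unfolding K_def by blast
    also have "\<dots> \<le> K * B" unfolding B_def using S1 fin[OF xV] Kpos
      by (auto intro!: card_mono)
    finally have DK: "D \<le> K * B" .
    have Bp: "B > 0" "D > 0" using pos[OF xV] pos[OF vV] by (auto simp: B_def D_def)
    have C0: "C \<ge> 0" "A \<ge> 0" by (auto simp: C_def A_def)
    have "A / B \<le> K * (C / D)"
    proof -
      have "A * D \<le> C * D" using AC Bp by simp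
      also have "\<dots> \<le> C * (K * B)" using DK C0 by (simp add: mult_left_mono)
      finally have "A * D \<le> K * C * B" by (simp add: algebra_simps)
      then show ?thesis using Bp by (simp add: field_simps)
    qed
    then show ?thesis
      using fin[OF xV] fin[OF vV]
      unfolding dens_quot_def A_def B_def C_def D_def N_def by simp
  qed
  have lim1: "(\<lambda>n. ?q v W (n + (j1+a1+a2))) \<longlonglongrightarrow> 0"
    using hv unfolding has_density_def by (simp add: LIMSEQ_ignore_initial_segment)
  then have lim2: "(\<lambda>n. K * ?q v W (n + (j1+a1+a2))) \<longlonglongrightarrow> 0"
    by (simp add: tendsto_mult_right_zero)
  have nonneg: "?q x W m \<ge> 0" for m by (simp add: dens_quot_def)
  have "(\<lambda>n. ?q x W (n + (j1+a1))) \<longlonglongrightarrow> 0"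
    by (rule tendsto_sandwich[OF _ _ tendsto_const lim2]) (auto simp: nonneg key)
  then have "?q x W \<longlonglongrightarrow> 0" by (rule LIMSEQ_offset)
  moreover have "\<forall>n. dens_quot_defined V E x W n"
    using fin[OF xV] by (simp add: dens_quot_defined_def)
  ultimately show ?thesis unfolding has_density_def by simp
qed

lemma compl_density:
  assumes conn: "connected_graph V E" and fin: "\<forall>n. finite (gball V E x n)"
    and WV: "W \<subseteq> V" and h: "has_density V E x W 0" and xV: "x \<in> V"
  shows "has_density V E x (V - W) 1"
proof -
  have eq: "dens_quot V E x (V - W) n = 1 - dens_quot V E x W n" for n
  proof -
    let ?B = "gball V E x n"
    have BV: "?B \<subseteq> V" unfolding gball_def by auto
    have "?B \<inter> (V - W) = ?B - (?B \<inter> W)" using BV by auto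
    then have "card (?B \<inter> (V - W)) = card ?B - card (?B \<inter> W)"
      using fin by (simp add: card_Diff_subset)
    moreover have "card (?B \<inter> W) \<le> card ?B" using fin by (simp add: card_mono)
    moreover have "card ?B > 0" using fin in_ball[OF xV]
      by (metis card_gt_0_iff empty_iff)
    ultimately show ?thesis using fin in_ball[OF xV, of E n] unfolding dens_quot_def
      by (auto simp add: of_nat_diff diff_divide_distrib)
  qed
  have "(\<lambda>n. 1 - dens_quot V E x W n) \<longlonglongrightarrow> 1 - 0"
    using h unfolding has_density_def by (intro tendsto_diff tendsto_const) auto
  then show ?thesis using fin unfolding has_density_def dens_quot_defined_def eq by simp
qed

lemma density_at_eq: "has_density V E x W d \<Longrightarrow> density_at V E x W = d"
  unfolding density_at_def
  by (rule the_equality) (auto simp: has_density_def intro: LIMSEQ_unique)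

lemma main_gen:
  fixes c :: real
  assumes conn: "connected_graph V E" and vV: "v \<in> V" and wV: "w \<in> V"
    and gr: "\<forall>n. finite (gball V E w n) \<and>
             real (card (gball V E w (Suc n))) < c * real (card (gball V E w n))"
    and WV: "W \<subseteq> V" and hv: "has_density V E v W 0"
  shows "density_exists V E W \<and> density_exists V E (V - W) \<and>
         density V E W = 0 \<and> density V E (V - W) = 1"
proof -
  have h0: "has_density V E x W 0" if "x \<in> V" for x
    using dens_zero_spread[OF conn vV wV gr WV hv that] .
  have fin: "finite (gball V E x n)" if "x \<in> V" for x n
    using ball_sub[OF conn that wV, of n] gr finite_subset by blast
  have h1: "has_density V E x (V - W) 1" if "x \<in> V" for x
    using compl_density[OF conn _ WV h0[OF that] that] fin[OF that] by blast
  have Vne: "V \<noteq> {}" using vV by auto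
  have "density V E W = (SUP x\<in>V. (0::real))"
    unfolding density_def by (rule SUP_cong) (auto simp: h0 density_at_eq)
  also have "\<dots> = 0" using Vne by simp
  finally have d0: "density V E W = 0" .
  have "density V E (V - W) = (SUP x\<in>V. (1::real))"
    unfolding density_def by (rule SUP_cong) (auto simp: h1 density_at_eq)
  also have "\<dots> = 1" using Vne by simp
  finally have d1: "density V E (V - W) = 1" .
  show ?thesis using h0 h1 d0 d1 unfolding density_exists_def by blast
qed

theorem lemma2p1:
  fixes V :: "'a set" and E :: "'a \<Rightarrow> 'a \<Rightarrow> bool" and v w :: 'a and c :: real
  assumes "connected_graph V E"
    and "v \<in> V" and "w \<in> V"
    and "\<forall>n. finite (gball V E w n) \<and>
             real (card (gball V E w (Suc n))) < c * real (card (gball V E w n))"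
    and "two_dist_density_zero_at V E v"
  shows "two_dist_density_zero V E"
proof -
  obtain l db dr where l: "two_distinguishing V E l"
    and hb: "has_density V E v (blue_class V l) db"
    and hr: "has_density V E v (red_class V l) dr" and m: "min db dr = 0"
    using assms(5) unfolding two_dist_density_zero_at_def coloring_density_zero_at_def by blast
  have br: "red_class V l = V - blue_class V l" "blue_class V l = V - red_class V l"
    by (auto simp: red_class_def blue_class_def)
  have sub: "blue_class V l \<subseteq> V" "red_class V l \<subseteq> V"
    by (auto simp: red_class_def blue_class_def)
  have "coloring_density_zero V E l"
  proof (cases "db = 0")
    case True
    from main_gen[OF assms(1-4) sub(1)] hb True br(1) show ?thesis
      unfolding coloring_density_zero_def by simp
  next
    case False
    then have "dr = 0" using m by (simp add: min_def split: if_splits)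
    from main_gen[OF assms(1-4) sub(2)] hr this br(2) show ?thesis
      unfolding coloring_density_zero_def by simp
  qed
  then show ?thesis using l unfolding two_dist_density_zero_def by blast
qed

end
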